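(* Let $k\ge1$ and $n:=2^k$. For each $x\in\langle C_k\rangle$, $C(x)$ is an isometric cycle of length $2n$ in $Q_n$ with flip sequence $(1,2,\dots,n,1,2,\dots,n)$, and the vertex sets of the cycles $C(x)$, $x\in\langle C_k\rangle$, form a partition of the vertex set of $Q_n$.
   Context: $Q_n$ is the $n$-dimensional hypercube: vertices are all subsets of $[n]=\{1,\dots,n\}$, with $x,y$ adjacent iff $|x\oplus y|=1$, where $\oplus$ is symmetric difference; an edge $\{x,x\oplus\{i\}\}$ has direction $i$. The flip sequence of a path/cycle is the sequence of directions of its consecutive edges. A subgraph is isometric if it preserves graph distances of $Q_n$. $\langle X\rangle$ denotes the set of all symmetric differences of finitely many members of the family $X$. Define $O_1:=C_1:=\emptyset$ and for $k\ge2$: $O_k:=\{\{2i-1,2i+1\}:1\le i\le 2^{k-1}-1\}$ and $C_k:=O_k\cup 2\cdot C_{k-1}$, where $2\cdot X$ doubles every element of every set in $X$. (All sets of $\langle C_k\rangle$ are subsets of $[n-1]$.) For $x\in\langle C_k\rangle$, $C(x)$ is the cycle with vertices $v_0,v_1,\dots,v_{2n-1}$ (cyclically), where $v_j:=x\oplus\{1,\dots,j\}$ for $0\le j\le n$ and $v_{n+j}:=x\oplus[n]\oplus\{1,\dots,j\}$ for $0\le j\le n-1$. *)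

theory Defs
  imports Main
begin

definition symdiff :: "'a set \<Rightarrow> 'a set \<Rightarrow> 'a set" (infixl "\<ominus>" 65) where
  "A \<ominus> B = (A - B) \<union> (B - A)"

definition Qverts :: "nat \<Rightarrow> nat set set" where
  "Qverts n = Pow {1..n}"

definition Qadj :: "nat set \<Rightarrow> nat set \<Rightarrow> bool" where
  "Qadj x y \<longleftrightarrow> card (x \<ominus> y) = 1"

definition is_walk :: "'a set \<Rightarrow> ('a \<Rightarrow> 'a \<Rightarrow> bool) \<Rightarrow> 'a list \<Rightarrow> bool" where
  "is_walk V E xs \<longleftrightarrow> xs \<noteq> [] \<and> set xs \<subseteq> V \<and>
     (\<forall>i. Suc i < length xs \<longrightarrow> E (xs ! i) (xs ! Suc i))"

definition gdist :: "'a set \<Rightarrow> ('a \<Rightarrow> 'a \<Rightarrow> bool) \<Rightarrow> 'a \<Rightarrow> 'a \<Rightarrow> nat" where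
  "gdist V E u v = (LEAST m. \<exists>xs. is_walk V E xs \<and> hd xs = u \<and> last xs = v \<and> length xs = Suc m)"

definition isometric_subgraph ::
  "'a set \<Rightarrow> ('a \<Rightarrow> 'a \<Rightarrow> bool) \<Rightarrow> 'a set \<Rightarrow> ('a \<Rightarrow> 'a \<Rightarrow> bool) \<Rightarrow> bool" where
  "isometric_subgraph V E W F \<longleftrightarrow> W \<subseteq> V \<and> (\<forall>u v. F u v \<longrightarrow> u \<in> W \<and> v \<in> W \<and> E u v) \<and>
     (\<forall>u\<in>W. \<forall>v\<in>W. gdist W F u v = gdist V E u v)"

inductive_set span :: "'a set set \<Rightarrow> 'a set set" for X where
  span_empty: "{} \<in> span X"
| span_step: "a \<in> X \<Longrightarrow> s \<in> span X \<Longrightarrow> a \<ominus> s \<in> span X"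

definition Ofam :: "nat \<Rightarrow> nat set set" where
  "Ofam k = (if k < 2 then {} else {{2*i - 1, 2*i + 1} | i. 1 \<le> i \<and> i \<le> 2^(k-1) - 1})"

fun Cfam :: "nat \<Rightarrow> nat set set" where
  "Cfam 0 = {}"
| "Cfam (Suc 0) = {}"
| "Cfam (Suc (Suc m)) = Ofam (Suc (Suc m)) \<union> (\<lambda>S. (\<lambda>a. 2 * a) ` S) ` Cfam (Suc m)"

definition cyc_vertex :: "nat \<Rightarrow> nat set \<Rightarrow> nat \<Rightarrow> nat set" where
  "cyc_vertex n x j = (if j \<le> n then x \<ominus> {1..j} else x \<ominus> {1..n} \<ominus> {1..j - n})"

definition cyc_verts :: "nat \<Rightarrow> nat set \<Rightarrow> nat set set" where
  "cyc_verts n x = cyc_vertex n x ` {0..<2*n}"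

definition cyc_adj :: "nat \<Rightarrow> nat set \<Rightarrow> nat set \<Rightarrow> nat set \<Rightarrow> bool" where
  "cyc_adj n x u v \<longleftrightarrow> (\<exists>j<2*n. {u, v} = {cyc_vertex n x j, cyc_vertex n x ((j + 1) mod (2*n))})"

end

theory Submission
  imports Defs
begin


lemma symdiff_iff[simp]: "a \<in> A \<ominus> B \<longleftrightarrow> (a \<in> A) \<noteq> (a \<in> B)"
  by (auto simp: symdiff_def)
lemma symdiff_assoc: "(A \<ominus> B) \<ominus> C = A \<ominus> (B \<ominus> C)" by auto
lemma symdiff_comm: "A \<ominus> B = B \<ominus> A" by auto
lemma symdiff_self[simp]: "A \<ominus> A = {}" by auto
lemma symdiff_empty[simp]: "A \<ominus> {} = A" "{} \<ominus> A = A" by auto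
lemma symdiff_cancel: "(x \<ominus> A) \<ominus> (x \<ominus> B) = A \<ominus> B" by auto

lemma card_symdiff_parity:
  assumes "finite A" "finite B"
  shows "card (A \<ominus> B) + 2 * card (A \<inter> B) = card A + card B"
proof -
  have e: "A \<ominus> B = (A - B) \<union> (B - A)" by auto
  have "card (A \<ominus> B) = card (A - B) + card (B - A)"
    unfolding e using assms by (intro card_Un_disjoint) auto
  moreover have "card (A - B) = card A - card (A \<inter> B)"
    using assms by (simp add: card_Diff_subset_Int)
  moreover have "card (B - A) = card B - card (A \<inter> B)"
    using assms by (metis Int_commute card_Diff_subset_Int finite_Int)
  moreover have "card (A \<inter> B) \<le> card A" "card (A \<inter> B) \<le> card B"
    using assms by (auto intro: card_mono)
  ultimately show ?thesis by linarith
qed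

definition Fv :: "nat \<Rightarrow> nat \<Rightarrow> nat set" where
  "Fv n j = (if j \<le> n then {1..j} else {1..n} \<ominus> {1..j - n})"

lemma cyc_vertex_Fv: "cyc_vertex n x j = x \<ominus> Fv n j"
  by (simp add: cyc_vertex_def Fv_def symdiff_assoc)

lemma Fv_mem: "j \<le> 2*n \<Longrightarrow> i \<in> Fv n j \<longleftrightarrow> (1 \<le> i \<and> i \<le> n \<and> i \<le> j \<and> j < i + n)"
  by (auto simp: Fv_def)

lemma Fv_sub: "j \<le> 2*n \<Longrightarrow> Fv n j \<subseteq> {1..n}"
  by (auto simp: Fv_def)

lemma Fv_flip:
  assumes "j < 2*n"
  shows "Fv n j \<ominus> Fv n ((j+1) mod (2*n)) = {j mod n + 1}"
proof (cases "j + 1 < 2*n")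
  case True
  hence m: "(j+1) mod (2*n) = j+1" by simp
  show ?thesis
  proof (cases "j < n")
    case True
    then show ?thesis unfolding m using assms \<open>j+1<2*n\<close> by (auto simp: Fv_mem)
  next
    case False
    hence "j mod n = j - n" using assms by (simp add: le_mod_geq)
    then show ?thesis unfolding m using assms \<open>j+1<2*n\<close> False by (auto simp: Fv_mem)
  qed
next
  case False
  hence j: "j = 2*n - 1" "n \<ge> 1" using assms by auto
  hence m: "(j+1) mod (2*n) = 0" by simp
  have jj: "j = (n - 1) + n" using j by simp
  have "j mod n = n - 1" unfolding jj mod_add_self2 using j by simp
  then show ?thesis unfolding m using j by (auto simp: Fv_mem)
qed

lemma Fv_flip_gen:
  assumes "n \<ge> 1"
  shows "Fv n (j mod (2*n)) \<ominus> Fv n ((j+1) mod (2*n)) = {j mod n + 1}"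
proof -
  have "j mod (2*n) < 2*n" using assms by simp
  from Fv_flip[OF this] have "Fv n (j mod (2*n)) \<ominus> Fv n ((j mod (2*n)+1) mod (2*n)) = {j mod (2*n) mod n + 1}" .
  moreover have "(j mod (2*n)+1) mod (2*n) = (j+1) mod (2*n)" by (simp add: mod_Suc_eq)
  moreover have "j mod (2*n) mod n = j mod n" by (simp add: mod_mod_cancel)
  ultimately show ?thesis by simp
qed



lemma mod_inj_aux: "(a + s) mod n = (a + t) mod (n::nat) \<Longrightarrow> s < t \<Longrightarrow> t < n \<Longrightarrow> False"
proof -
  assume h: "(a + s) mod n = (a + t) mod n" "s < t" "t < n"
  have "n dvd (a + t) - (a + s)" using h mod_eq_dvd_iff_nat[of "a+s" "a+t" n] by simp
  hence "n dvd t - s" by simp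
  moreover have "0 < t - s" "t - s < n" using h by auto
  ultimately show False using nat_dvd_not_less by blast
qed

lemma symdiff_single: "e \<notin> A \<Longrightarrow> A \<ominus> {e} = insert e A" by auto

lemma Fv_dist:
  assumes "n \<ge> 1" "t \<le> n"
  shows "Fv n (a mod (2*n)) \<ominus> Fv n ((a+t) mod (2*n)) = (\<lambda>s. (a+s) mod n + 1) ` {..<t}"
  using assms(2)
proof (induction t)
  case 0
  then show ?case by simp
next
  case (Suc t)
  have IH: "Fv n (a mod (2*n)) \<ominus> Fv n ((a+t) mod (2*n)) = (\<lambda>s. (a+s) mod n + 1) ` {..<t}"
    using Suc by simp
  have fl: "Fv n ((a+t) mod (2*n)) \<ominus> Fv n ((a+t+1) mod (2*n)) = {(a+t) mod n + 1}"
    using Fv_flip_gen[OF assms(1)] by simp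
  have "Fv n (a mod (2*n)) \<ominus> Fv n ((a + Suc t) mod (2*n))
     = (Fv n (a mod (2*n)) \<ominus> Fv n ((a+t) mod (2*n))) \<ominus> (Fv n ((a+t) mod (2*n)) \<ominus> Fv n ((a+t+1) mod (2*n)))"
    by auto
  also have "\<dots> = ((\<lambda>s. (a+s) mod n + 1) ` {..<t}) \<ominus> {(a+t) mod n + 1}" using IH fl by simp
  also have "\<dots> = insert ((a+t) mod n + 1) ((\<lambda>s. (a+s) mod n + 1) ` {..<t})"
  proof -
    have "(a+t) mod n + 1 \<notin> (\<lambda>s. (a+s) mod n + 1) ` {..<t}"
    proof
      assume "(a+t) mod n + 1 \<in> (\<lambda>s. (a+s) mod n + 1) ` {..<t}"
      then obtain s where "s < t" "(a+t) mod n + 1 = (a+s) mod n + 1" by auto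
      thus False using mod_inj_aux[of a s n t] Suc.prems by simp
    qed
    thus ?thesis by (rule symdiff_single)
  qed
  also have "\<dots> = (\<lambda>s. (a+s) mod n + 1) ` {..<Suc t}" by (simp add: lessThan_Suc)
  finally show ?case .
qed

lemma card_Fv_dist:
  assumes "n \<ge> 1" "t \<le> n"
  shows "card (Fv n (a mod (2*n)) \<ominus> Fv n ((a+t) mod (2*n))) = t"
proof -
  have "inj_on (\<lambda>s. (a+s) mod n + 1) {..<t}"
  proof (rule inj_onI)
    fix s s' assume "s \<in> {..<t}" "s' \<in> {..<t}" "(a+s) mod n + 1 = (a+s') mod n + 1"
    thus "s = s'" using mod_inj_aux[of a s n s'] mod_inj_aux[of a s' n s] assms
      by (metis add_right_cancel lessThan_iff linorder_neqE_nat order_less_le_trans)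
  qed
  thus ?thesis unfolding Fv_dist[OF assms] by (simp add: card_image)
qed

lemma is_walk_rev:
  assumes "is_walk V E xs" "\<And>u v. E u v \<Longrightarrow> E v u"
  shows "is_walk V E (rev xs)"
  unfolding is_walk_def
proof (intro conjI allI impI)
  show "rev xs \<noteq> []" "set (rev xs) \<subseteq> V" using assms(1) by (auto simp: is_walk_def)
  fix i assume i: "Suc i < length (rev xs)"
  let ?L = "length xs"
  have "E (xs ! (?L - Suc (Suc i))) (xs ! Suc (?L - Suc (Suc i)))"
    using assms(1) i unfolding is_walk_def by auto
  moreover have "Suc (?L - Suc (Suc i)) = ?L - Suc i" using i by simp
  ultimately have "E (xs ! (?L - Suc i)) (xs ! (?L - Suc (Suc i)))" using assms(2) by metis
  thus "E (rev xs ! i) (rev xs ! Suc i)" using i by (simp add: rev_nth)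
qed

lemma is_walk_lift:
  assumes "is_walk W F xs" "W \<subseteq> V" "\<And>u v. F u v \<Longrightarrow> E u v"
  shows "is_walk V E xs"
  using assms unfolding is_walk_def by blast

lemma gdist_le:
  assumes "is_walk V E xs" "hd xs = u" "last xs = v"
  shows "gdist V E u v \<le> length xs - 1"
proof -
  have "length xs = Suc (length xs - 1)" using assms(1) by (cases xs) (auto simp: is_walk_def)
  thus ?thesis unfolding gdist_def using assms by (intro Least_le) blast
qed

lemma gdist_ex:
  assumes "is_walk V E xs" "hd xs = u" "last xs = v"
  shows "\<exists>ys. is_walk V E ys \<and> hd ys = u \<and> last ys = v \<and> length ys = Suc (gdist V E u v)"
proof -
  have "length xs = Suc (length xs - 1)" using assms(1) by (cases xs) (auto simp: is_walk_def)
  hence "\<exists>m ys. is_walk V E ys \<and> hd ys = u \<and> last ys = v \<and> length ys = Suc m" using assms by blast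
  thus ?thesis unfolding gdist_def by (rule LeastI_ex)
qed

lemma walk_lower:
  assumes "is_walk V Qadj xs" "i < length xs"
  shows "finite (xs!0 \<ominus> xs!i) \<and> card (xs!0 \<ominus> xs!i) \<le> i"
  using assms(2)
proof (induction i)
  case 0 then show ?case by simp
next
  case (Suc i)
  have IH: "finite (xs!0 \<ominus> xs!i)" "card (xs!0 \<ominus> xs!i) \<le> i" using Suc by auto
  have "Qadj (xs!i) (xs!Suc i)" using assms(1) Suc.prems unfolding is_walk_def by blast
  hence c1: "card (xs!i \<ominus> xs!Suc i) = 1" by (simp add: Qadj_def)
  hence f1: "finite (xs!i \<ominus> xs!Suc i)" by (metis card_ge_0_finite zero_less_one)
  have sub: "xs!0 \<ominus> xs!Suc i \<subseteq> (xs!0 \<ominus> xs!i) \<union> (xs!i \<ominus> xs!Suc i)" by auto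
  have fin: "finite (xs!0 \<ominus> xs!Suc i)" using finite_subset[OF sub] IH f1 by blast
  have "card (xs!0 \<ominus> xs!Suc i) \<le> card ((xs!0 \<ominus> xs!i) \<union> (xs!i \<ominus> xs!Suc i))"
    using sub IH f1 by (intro card_mono) auto
  also have "\<dots> \<le> card (xs!0 \<ominus> xs!i) + card (xs!i \<ominus> xs!Suc i)" by (rule card_Un_le)
  finally show ?case using IH c1 fin by simp
qed

lemma walk_lower':
  assumes "is_walk V Qadj xs"
  shows "card (hd xs \<ominus> last xs) \<le> length xs - 1"
proof -
  have ne: "xs \<noteq> []" using assms by (simp add: is_walk_def)
  have "card (xs!0 \<ominus> xs!(length xs - 1)) \<le> length xs - 1"
    using walk_lower[OF assms, of "length xs - 1"] ne by simp
  thus ?thesis using ne by (simp add: hd_conv_nth last_conv_nth)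
qed



definition half :: "nat set \<Rightarrow> nat set" where "half x = {a. 2*a \<in> x}"
definition dbl :: "nat set \<Rightarrow> nat set" where "dbl S = (\<lambda>a. 2*a) ` S"

fun good :: "nat \<Rightarrow> nat set \<Rightarrow> bool" where
  "good 0 x = (x = {})"
| "good (Suc 0) x = (x = {})"
| "good (Suc (Suc m)) x = (x \<subseteq> {1..2^(Suc (Suc m)) - 1} \<and> even (card {a\<in>x. odd a}) \<and> good (Suc m) (half x))"

lemma nat_cases3: obtains "k = 0" | "k = Suc 0" | m where "k = Suc (Suc m)"
  by (metis not0_implies_Suc)

lemma good_empty: "good k {}"
proof (induction k rule: less_induct)
  case (less k)
  show ?case by (cases k rule: nat_cases3) (use less in \<open>auto simp: half_def\<close>)
qed

lemma good_sub: "good k x \<Longrightarrow> x \<subseteq> {1..2^k - 1}"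
  by (cases k rule: nat_cases3) auto

lemma pow_facts: "(2::nat)^(Suc (Suc m)) = 2 * 2^(Suc m)" "(1::nat) \<le> 2^(Suc m)" by simp_all

lemma half_symdiff: "half (x \<ominus> y) = half x \<ominus> half y" by (auto simp: half_def)

lemma good_symdiff: "good k x \<Longrightarrow> good k y \<Longrightarrow> good k (x \<ominus> y)"
proof (induction k arbitrary: x y rule: less_induct)
  case (less k)
  show ?case
  proof (cases k rule: nat_cases3)
    case (3 m)
    let ?N = "2^(Suc (Suc m)) - 1 :: nat"
    have gx: "x \<subseteq> {1..?N}" "even (card {a\<in>x. odd a})" "good (Suc m) (half x)"
      using less.prems(1) unfolding 3 good.simps(3) by blast+
    have gy: "y \<subseteq> {1..?N}" "even (card {a\<in>y. odd a})" "good (Suc m) (half y)"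
      using less.prems(2) unfolding 3 good.simps(3) by blast+
    have fx: "finite {a\<in>x. odd a}" using finite_subset[OF gx(1) finite_atLeastAtMost] by simp
    have fy: "finite {a\<in>y. odd a}" using finite_subset[OF gy(1) finite_atLeastAtMost] by simp
    have e: "{a\<in>x \<ominus> y. odd a} = {a\<in>x. odd a} \<ominus> {a\<in>y. odd a}" by auto
    have "even (card {a\<in>x \<ominus> y. odd a} + 2 * card ({a\<in>x. odd a} \<inter> {a\<in>y. odd a}))"
      unfolding e card_symdiff_parity[OF fx fy] using gx(2) gy(2) by simp
    hence "even (card {a\<in>x \<ominus> y. odd a})" by simp
    moreover have "good (Suc m) (half (x \<ominus> y))" unfolding half_symdiff
      using less.IH[of "Suc m"] gx(3) gy(3) 3 by blast
    moreover have "x \<ominus> y \<subseteq> x \<union> y" by auto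
    hence "x \<ominus> y \<subseteq> {1..?N}" using gx(1) gy(1) by blast
    ultimately show ?thesis unfolding 3 good.simps(3) by blast
  next
    case 1 thus ?thesis using less.prems by simp
  next
    case 2 thus ?thesis using less.prems by simp
  qed
qed

lemma span_symdiff: "s \<in> span X \<Longrightarrow> t \<in> span X \<Longrightarrow> s \<ominus> t \<in> span X"
proof (induction s rule: span.induct)
  case span_empty then show ?case by simp
next
  case (span_step a s)
  have "a \<ominus> s \<ominus> t = a \<ominus> (s \<ominus> t)" by (rule symdiff_assoc)
  then show ?case using span_step by (simp add: span.span_step)
qed

lemma span_gen: "a \<in> X \<Longrightarrow> a \<in> span X"
  using span.span_step[OF _ span.span_empty, of a X] by simp

lemma span_mono: assumes "X \<subseteq> Y" "s \<in> span X" shows "s \<in> span Y"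
  using assms(2) by (induction s rule: span.induct) (use assms(1) in \<open>auto intro: span.intros\<close>)

lemma dbl_mem: "(2*a \<in> (\<lambda>a::nat. 2*a) ` S) = (a \<in> S)" by auto

lemma dbl_symdiff: "dbl (A \<ominus> B) = dbl A \<ominus> dbl B" by (auto simp: dbl_def dbl_mem)

lemma span_dbl: "s \<in> span X \<Longrightarrow> dbl s \<in> span (dbl ` X)"
proof (induction s rule: span.induct)
  case span_empty then show ?case by (simp add: dbl_def span.span_empty)
next
  case (span_step a s)
  then show ?case unfolding dbl_symdiff by (auto intro: span.span_step)
qed

lemma Cfam_SS: "Cfam (Suc (Suc m)) = Ofam (Suc (Suc m)) \<union> dbl ` Cfam (Suc m)"
  by (simp add: dbl_def)

lemma Ofam_SS: "Ofam (Suc (Suc m)) = {{2*i - 1, 2*i + 1} | i. 1 \<le> i \<and> i \<le> 2^(Suc m) - 1}"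
  by (simp add: Ofam_def)

lemma half_dbl: "half (dbl S) = S" by (auto simp: half_def dbl_def)

lemma span_good: "x \<in> span (Cfam (Suc m)) \<Longrightarrow> good (Suc m) x"
proof (induction m arbitrary: x)
  case 0
  then show ?case by (induction x rule: span.induct) auto
next
  case (Suc m)
  have gen: "good (Suc (Suc m)) a" if a: "a \<in> Cfam (Suc (Suc m))" for a
  proof -
    from a consider "a \<in> Ofam (Suc (Suc m))" | S where "S \<in> Cfam (Suc m)" "a = dbl S"
      unfolding Cfam_SS by blast
    then show ?thesis
    proof cases
      case 1
      then obtain i where i: "a = {2*i - 1, 2*i + 1}" "1 \<le> i" "i \<le> 2^(Suc m) - 1"
        unfolding Ofam_SS by blast
      have "2*i + 1 \<le> 2^(Suc (Suc m)) - 1" using i(3) pow_facts[of m] by arith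
      hence s: "a \<subseteq> {1..2^(Suc (Suc m)) - 1}" using i by auto
      have o: "{b\<in>a. odd b} = a" using i by auto
      have c: "card a = 2" using i by auto
      have nb: "2*b \<noteq> 2*i - 1 \<and> 2*b \<noteq> 2*i+1" for b using i(2) by arith
      have h: "half a = {}" using i nb by (auto simp: half_def)
      show ?thesis using s o c h good_empty by simp
    next
      case 2
      have gS: "good (Suc m) S" using Suc.IH span_gen[OF 2(1)] by blast
      have sS: "S \<subseteq> {1..2^(Suc m) - 1}" using good_sub[OF gS] .
      have "a \<subseteq> {1..2^(Suc (Suc m)) - 1}"
      proof
        fix b assume "b \<in> a"
        then obtain c where c: "c \<in> S" "b = 2*c" using 2 by (auto simp: dbl_def)
        hence "1 \<le> c" "c \<le> 2^(Suc m) - 1" using sS by auto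
        thus "b \<in> {1..2^(Suc (Suc m)) - 1}" using c pow_facts[of m] by auto
      qed
      moreover have "{b\<in>a. odd b} = {}" using 2 by (auto simp: dbl_def)
      moreover have "half a = S" using 2 half_dbl by simp
      ultimately show ?thesis using gS by (simp only: good.simps) simp
    qed
  qed
  from Suc.prems show ?case
  proof (induction x rule: span.induct)
    case span_empty show ?case by (rule good_empty)
  next
    case (span_step a s) thus ?case using gen good_symdiff by blast
  qed
qed



lemma good_SS: "good (Suc (Suc m)) x \<longleftrightarrow> (x \<subseteq> {1..2^(Suc (Suc m)) - 1} \<and> even (card {a\<in>x. odd a}) \<and> good (Suc m) (half x))"
  by (rule good.simps(3))

lemma parith1: "(x::nat) \<le> P - 1 \<Longrightarrow> 1 \<le> P \<Longrightarrow> 2*x + 1 \<le> 2*P - 1" by arith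
lemma parith2: "2*(x::nat) \<le> 2*P - 1 \<Longrightarrow> x \<le> P - 1" by arith
lemma pow_arith1: "x \<le> 2^(Suc m) - 1 \<Longrightarrow> 2*x + 1 \<le> 2^(Suc (Suc m)) - (1::nat)"
  unfolding pow_facts(1) by (rule parith1) (simp_all add: pow_facts(2))
lemma pow_arith2: "2*x \<le> 2^(Suc (Suc m)) - 1 \<Longrightarrow> x \<le> 2^(Suc m) - (1::nat)"
  unfolding pow_facts(1) by (rule parith2)

lemma gen_pair:
  assumes "odd p" "p + 2 \<le> 2^(Suc (Suc m)) - 1"
  shows "{p, p+2} \<in> span (Ofam (Suc (Suc m)))"
proof -
  obtain k where k: "p = 2*k + 1" using assms(1) by (blast elim: oddE)
  define P :: nat where "P = 2^(Suc m)"
  have PP: "2^(Suc (Suc m)) = 2 * P" unfolding P_def by simp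
  have b: "2*k + 3 \<le> 2*P - 1" using assms(2) k unfolding PP by simp
  have i1: "k + 1 \<le> P - 1" using b by linarith
  have pi: "p = 2*(k+1) - 1" "p + 2 = 2*(k+1) + 1" using k by simp_all
  have "{p, p+2} \<in> Ofam (Suc (Suc m))" unfolding Ofam_SS P_def[symmetric]
    using pi i1 by (intro CollectI exI[of _ "k+1"]) simp
  thus ?thesis by (rule span_gen)
qed

lemma odd_pair:
  assumes "odd p" "q = p + 2 * Suc d" "q \<le> 2^(Suc (Suc m)) - 1"
  shows "{p, q} \<in> span (Ofam (Suc (Suc m)))"
  using assms
proof (induction d arbitrary: p)
  case 0 thus ?case using gen_pair by simp
next
  case (Suc d)
  have a: "{p, p+2} \<in> span (Ofam (Suc (Suc m)))" using gen_pair Suc.prems by simp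
  have b: "{p+2, q} \<in> span (Ofam (Suc (Suc m)))" using Suc.IH[of "p+2"] Suc.prems by simp
  have "{p, p+2} \<ominus> {p+2, q} = {p, q}" using Suc.prems by auto
  thus ?case using span_symdiff[OF a b] by simp
qed

lemma w4: "odd (p::nat) \<Longrightarrow> odd q \<Longrightarrow> p < q \<Longrightarrow> \<exists>d. q = p + 2 * Suc d" by presburger

lemma odd_pair':
  assumes "odd p" "odd q" "p \<noteq> q" "p \<le> 2^(Suc (Suc m)) - 1" "q \<le> 2^(Suc (Suc m)) - 1"
  shows "{p, q} \<in> span (Ofam (Suc (Suc m)))"
proof (cases "p < q")
  case True
  obtain d where "q = p + 2 * Suc d" using True assms(1,2) w4 by blast
  thus ?thesis using odd_pair assms by blast
next
  case False
  hence "q < p" using assms(3) by simp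
  then obtain d where "p = q + 2 * Suc d" using assms(1,2) w4 by blast
  thus ?thesis using odd_pair[where p=q and q=p and d=d] assms by (simp add: insert_commute)
qed

lemma odd_set:
  assumes "finite A" "\<forall>a\<in>A. odd a \<and> a \<le> 2^(Suc (Suc m)) - 1" "even (card A)"
  shows "A \<in> span (Ofam (Suc (Suc m)))"
  using assms
proof (induction "card A" arbitrary: A rule: less_induct)
  case less
  show ?case
  proof (cases "A = {}")
    case True thus ?thesis by (simp add: span.span_empty)
  next
    case False
    then obtain p where p: "p \<in> A" by blast
    have c1: "card (A - {p}) = card A - 1" using p less.prems(1) by simp
    have c0: "card A \<noteq> 0" using False less.prems(1) by simp
    have "card (A - {p}) \<noteq> 0"
    proof
      assume "card (A - {p}) = 0"
      hence "card A = 1" using c1 c0 by linarith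
      thus False using less.prems(3) by simp
    qed
    hence "A - {p} \<noteq> {}" by (metis card.empty)
    then obtain q where q: "q \<in> A - {p}" by blast
    let ?B = "A - {p, q}"
    have sub: "{p, q} \<subseteq> A" using p q by blast
    have c2: "card {p, q} = 2" using q by simp
    have cB: "card ?B = card A - 2" using card_Diff_subset[OF _ sub] c2 by simp
    have ge: "card A \<ge> 2" using card_mono[OF less.prems(1) sub] c2 by simp
    have lt: "card ?B < card A" using cB ge by simp
    have fB: "finite ?B" using less.prems(1) by simp
    have aB: "\<forall>a\<in>?B. odd a \<and> a \<le> 2^(Suc (Suc m)) - 1" using less.prems(2) by blast
    have cB2: "card ?B + 2 = card A" using cB ge by linarith
    have eB: "even (card ?B)" using cB2 less.prems(3) by presburger
    have SB: "?B \<in> span (Ofam (Suc (Suc m)))"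
      using less.hyps[of ?B, OF lt fB aB eB] .
    have pa1: "odd p \<and> p \<le> 2^(Suc (Suc m)) - 1" using less.prems(2) p by blast
    have qA: "q \<in> A" using q by blast
    have pa2: "odd q \<and> q \<le> 2^(Suc (Suc m)) - 1" using less.prems(2) qA by blast
    have pq: "p \<noteq> q" using q by blast
    have SP: "{p, q} \<in> span (Ofam (Suc (Suc m)))"
      by (rule odd_pair'[OF conjunct1[OF pa1] conjunct1[OF pa2] pq conjunct2[OF pa1] conjunct2[OF pa2]])
    have eq: "{p, q} \<ominus> ?B = A" using sub by auto
    show ?thesis using span_symdiff[OF SP SB] unfolding eq .
  qed
qed

lemma dbl_half_mem: "a \<in> dbl (half x) \<longleftrightarrow> even a \<and> a \<in> x"
  by (auto simp: dbl_def half_def elim!: evenE)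

lemma good_span: "good (Suc m) x \<Longrightarrow> x \<in> span (Cfam (Suc m))"
proof (induction m arbitrary: x)
  case 0 thus ?case by (simp add: span.span_empty)
next
  case (Suc m)
  have g: "x \<subseteq> {1..2^(Suc (Suc m)) - 1}" "even (card {a\<in>x. odd a})" "good (Suc m) (half x)"
    using Suc.prems unfolding good_SS by blast+
  have "{a\<in>x. odd a} \<in> span (Ofam (Suc (Suc m)))"
    using g by (intro odd_set) (auto intro: finite_subset[OF _ finite_atLeastAtMost])
  hence A: "{a\<in>x. odd a} \<in> span (Cfam (Suc (Suc m)))"
    by (rule span_mono[rotated]) (unfold Cfam_SS, blast)
  have "dbl (half x) \<in> span (dbl ` Cfam (Suc m))" using Suc.IH[OF g(3)] by (rule span_dbl)
  hence B: "dbl (half x) \<in> span (Cfam (Suc (Suc m)))"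
    by (rule span_mono[rotated]) (unfold Cfam_SS, blast)
  have "{a\<in>x. odd a} \<ominus> dbl (half x) = x" by (auto simp: dbl_half_mem)
  thus ?case using span_symdiff[OF A B] by simp
qed

lemma w1: "((p::nat) \<le> 2*a) = ((p+1) div 2 \<le> a)" by presburger
lemma w2: "(2*a \<le> (q::nat)) = (a \<le> q div 2)" by presburger
lemma w3: "\<not> ((p::nat)+1) div 2 \<le> q div 2 \<Longrightarrow> 1 \<le> p \<Longrightarrow> p \<le> q \<Longrightarrow> p = q \<and> odd p" by presburger

lemma interval_not_good: "1 \<le> p \<Longrightarrow> p \<le> q \<Longrightarrow> \<not> good k {p..q}"
proof (induction k arbitrary: p q rule: less_induct)
  case (less k)
  show ?case
  proof (cases k rule: nat_cases3)
    case 1 thus ?thesis using less.prems by simp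
  next
    case 2 thus ?thesis using less.prems by simp
  next
    case (3 m)
    show ?thesis
    proof
      assume "good k {p..q}"
      hence g: "even (card {a\<in>{p..q}. odd a})" "good (Suc m) (half {p..q})"
        unfolding 3 good_SS by blast+
      have h: "half {p..q} = {(p+1) div 2 .. q div 2}"
        by (rule set_eqI) (simp only: half_def mem_Collect_eq atLeastAtMost_iff w1 w2)
      show False
      proof (cases "(p+1) div 2 \<le> q div 2")
        case True
        have "1 \<le> (p+1) div 2" using less.prems by simp
        moreover have "Suc m < k" using 3 by simp
        ultimately have "\<not> good (Suc m) {(p+1) div 2 .. q div 2}"
          using less.IH[of "Suc m" "(p+1) div 2" "q div 2"] True by blast
        thus False using g(2) unfolding h by blast
      next
        case False
        have pq: "p = q \<and> odd p" using w3[OF False less.prems] .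
        hence "p = q" "odd p" by blast+
        hence "{a\<in>{p..q}. odd a} = {p}" by auto
        hence "card {a\<in>{p..q}. odd a} = 1" by simp
        thus False using g(1) by simp
      qed
    qed
  qed
qed

lemma cover_good:
  "y \<subseteq> {1..2^(Suc m) - 1} \<Longrightarrow> \<exists>j \<le> 2^(Suc m) - 1. good (Suc m) (y \<ominus> {1..j})"
proof (induction m arbitrary: y)
  case 0
  hence "y = {} \<or> y = {1}" by auto
  thus ?case
  proof
    assume "y = {}" thus ?case by (intro exI[of _ 0]) simp
  next
    assume "y = {1}" thus ?case by (intro exI[of _ 1]) auto
  qed
next
  case (Suc m)
  let ?N = "2^(Suc (Suc m)) - 1 :: nat"
  have "half y \<subseteq> {1..2^(Suc m) - 1}"
  proof
    fix a assume "a \<in> half y"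
    hence "2*a \<in> y" by (simp add: half_def)
    hence "1 \<le> 2*a" "2*a \<le> ?N" using Suc.prems by auto
    thus "a \<in> {1..2^(Suc m) - 1}" using pow_arith2[of a m] by simp
  qed
  then obtain j' where j': "j' \<le> 2^(Suc m) - 1" "good (Suc m) (half y \<ominus> {1..j'})"
    using Suc.IH by blast
  have hj: "half (y \<ominus> {1..j}) = half y \<ominus> {1..j'}" if "j = 2*j' \<or> j = 2*j'+1" for j
  proof -
    have h: "2*a \<in> {1..j} \<longleftrightarrow> a \<in> {1..j'}" for a
      unfolding atLeastAtMost_iff using that by arith
    show ?thesis by (rule set_eqI) (simp only: half_def mem_Collect_eq symdiff_iff h)
  qed
  have sj: "y \<ominus> {1..j} \<subseteq> {1..?N}" if "j \<le> 2*j'+1" for j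
  proof -
    have "2*j'+1 \<le> ?N" using j'(1) by (rule pow_arith1)
    hence "{1..j} \<subseteq> {1..?N}" using that by auto
    moreover have "y \<ominus> {1..j} \<subseteq> y \<union> {1..j}" by auto
    ultimately show ?thesis using Suc.prems by blast
  qed
  have jN: "2*j'+1 \<le> ?N" using j'(1) by (rule pow_arith1)
  let ?A0 = "{a\<in>y \<ominus> {1..2*j'}. odd a}"
  have f0: "finite (y \<ominus> {1..2*j'})" using finite_subset[OF sj[of "2*j'"] finite_atLeastAtMost] by simp
  have fA0: "finite ?A0" by (rule finite_subset[OF _ f0]) blast
  show ?case
  proof (cases "even (card ?A0)")
    case True
    have "good (Suc (Suc m)) (y \<ominus> {1..2*j'})"
      unfolding good_SS using sj[of "2*j'"] True hj[of "2*j'"] j'(2) by simp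
    thus ?thesis using jN by (intro exI[of _ "2*j'"]) simp
  next
    case False
    have e: "{a\<in>y \<ominus> {1..2*j'+1}. odd a} = ?A0 \<ominus> {2*j'+1}" by auto
    have "card (?A0 \<ominus> {2*j'+1}) + 2 * card (?A0 \<inter> {2*j'+1}) = card ?A0 + 1"
      using card_symdiff_parity[OF fA0, of "{2*j'+1}"] by simp
    hence "even (card {a\<in>y \<ominus> {1..2*j'+1}. odd a})" unfolding e using False by presburger
    hence "good (Suc (Suc m)) (y \<ominus> {1..2*j'+1})"
      unfolding good_SS using sj[of "2*j'+1"] hj[of "2*j'+1"] j'(2) by simp
    thus ?thesis using jN by (intro exI[of _ "2*j'+1"]) simp
  qed
qed



lemma FvD:
  assumes "j < j'" "j' < 2*n"
  shows "n \<in> Fv n j \<ominus> Fv n j' \<or> (\<exists>p q. 1 \<le> p \<and> p \<le> q \<and> Fv n j \<ominus> Fv n j' = {p..q})"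
proof -
  have jl: "j \<le> 2*n" "j' \<le> 2*n" using assms by auto
  consider "j' \<le> n" | "j < n" "n < j'" | "j = n" "n < j'" | "n < j" using assms by linarith
  then show ?thesis
  proof cases
    case 1
    have "Fv n j \<ominus> Fv n j' = {j+1..j'}"
      by (rule set_eqI) (simp only: symdiff_iff Fv_mem[OF jl(1)] Fv_mem[OF jl(2)] atLeastAtMost_iff, use 1 assms in arith)
    thus ?thesis using assms by (intro disjI2 exI[of _ "j+1"] exI[of _ j']) simp
  next
    case 2
    have "n \<in> Fv n j \<ominus> Fv n j'"
      by (simp only: symdiff_iff Fv_mem[OF jl(1)] Fv_mem[OF jl(2)], use 2 assms in arith)
    thus ?thesis by blast
  next
    case 3
    have "Fv n j \<ominus> Fv n j' = {1..j'-n}"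
      by (rule set_eqI) (simp only: symdiff_iff Fv_mem[OF jl(1)] Fv_mem[OF jl(2)] atLeastAtMost_iff, use 3 assms in arith)
    thus ?thesis using 3 by (intro disjI2 exI[of _ 1] exI[of _ "j'-n"]) simp
  next
    case 4
    have "Fv n j \<ominus> Fv n j' = {j-n+1..j'-n}"
      by (rule set_eqI) (simp only: symdiff_iff Fv_mem[OF jl(1)] Fv_mem[OF jl(2)] atLeastAtMost_iff, use 4 assms in arith)
    thus ?thesis using 4 assms by (intro disjI2 exI[of _ "j-n+1"] exI[of _ "j'-n"]) simp
  qed
qed

lemma FvD_good:
  assumes "j \<noteq> j'" "j < 2*n" "j' < 2*n" "good k (Fv n j \<ominus> Fv n j')" "n = 2^k"
  shows False
proof -
  have D: "n \<in> Fv n j \<ominus> Fv n j' \<or> (\<exists>p q. 1 \<le> p \<and> p \<le> q \<and> Fv n j \<ominus> Fv n j' = {p..q})"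
  proof (cases "j < j'")
    case True thus ?thesis using FvD[OF True assms(3)] by blast
  next
    case False
    hence "j' < j" using assms(1) by simp
    from FvD[OF this assms(2)] show ?thesis by (simp only: symdiff_comm)
  qed
  have sub: "Fv n j \<ominus> Fv n j' \<subseteq> {1..n - 1}" using good_sub[OF assms(4)] assms(5) by simp
  have n0: "0 < n" using assms(5) by simp
  have nn: "n \<notin> {1..n - 1}" using n0 by simp
  from D show False
  proof
    assume "n \<in> Fv n j \<ominus> Fv n j'" thus False using sub nn by blast
  next
    assume "\<exists>p q. 1 \<le> p \<and> p \<le> q \<and> Fv n j \<ominus> Fv n j' = {p..q}"
    then obtain p q where pq: "1 \<le> p" "p \<le> q" "Fv n j \<ominus> Fv n j' = {p..q}" by blast
    show False using interval_not_good[OF pq(1,2), of k] assms(4) unfolding pq(3) by blast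
  qed
qed

lemma cyc_walk:
  assumes "n \<ge> 1" "a < 2*n" "t \<le> n"
  shows "\<exists>ws. is_walk (cyc_verts n x) (cyc_adj n x) ws \<and> hd ws = cyc_vertex n x a
     \<and> last ws = cyc_vertex n x ((a+t) mod (2*n)) \<and> length ws = Suc t
     \<and> card (cyc_vertex n x a \<ominus> cyc_vertex n x ((a+t) mod (2*n))) = t"
proof -
  let ?cv = "cyc_vertex n x"
  define ws where "ws = map (\<lambda>s. ?cv ((a+s) mod (2*n))) [0..<Suc t]"
  have len: "length ws = Suc t" unfolding ws_def by simp
  have nth: "ws ! i = ?cv ((a+i) mod (2*n))" if "i < Suc t" for i
    unfolding ws_def using that by (simp del: upt_Suc)
  have walk: "is_walk (cyc_verts n x) (cyc_adj n x) ws"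
    unfolding is_walk_def
  proof (intro conjI allI impI)
    show "ws \<noteq> []" using len by auto
    show "set ws \<subseteq> cyc_verts n x"
      unfolding ws_def cyc_verts_def using assms(1) by auto
    fix i assume i: "Suc i < length ws"
    let ?j = "(a+i) mod (2*n)"
    have j: "?j < 2*n" using assms(1) by simp
    have e: "(?j + 1) mod (2*n) = (a + Suc i) mod (2*n)" by (simp add: mod_Suc_eq)
    have "cyc_adj n x (?cv ?j) (?cv ((?j + 1) mod (2*n)))"
      unfolding cyc_adj_def using j by blast
    thus "cyc_adj n x (ws ! i) (ws ! Suc i)" using i len e by (simp add: nth)
  qed
  have ne: "ws \<noteq> []" using len by auto
  have hd: "hd ws = ?cv a" using len nth[of 0] assms(2) ne by (simp add: hd_conv_nth)
  have lst: "last ws = ?cv ((a+t) mod (2*n))" using len nth[of t] ne by (simp add: last_conv_nth)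
  have "card (?cv a \<ominus> ?cv ((a+t) mod (2*n))) = t"
    using card_Fv_dist[OF assms(1,3), of a] assms(2) by (simp add: cyc_vertex_Fv symdiff_cancel)
  thus ?thesis using walk hd lst len by blast
qed

lemma cyc_walk2:
  assumes "n \<ge> 1" "a < 2*n" "b < 2*n"
  shows "\<exists>ws. is_walk (cyc_verts n x) (cyc_adj n x) ws \<and> hd ws = cyc_vertex n x a
     \<and> last ws = cyc_vertex n x b \<and> length ws = Suc (card (cyc_vertex n x a \<ominus> cyc_vertex n x b))"
proof -
  let ?cv = "cyc_vertex n x"
  have symA: "cyc_adj n x v u" if "cyc_adj n x u v" for u v
    using that unfolding cyc_adj_def by (metis insert_commute)
  have rev: "\<exists>ws. is_walk (cyc_verts n x) (cyc_adj n x) ws \<and> hd ws = ?cv a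
     \<and> last ws = ?cv b \<and> length ws = Suc (card (?cv a \<ominus> ?cv b))"
    if "is_walk (cyc_verts n x) (cyc_adj n x) ws" "hd ws = ?cv b" "last ws = ?cv a"
       "length ws = Suc (card (?cv b \<ominus> ?cv a))" for ws
  proof -
    have ne: "ws \<noteq> []" using that(1) by (simp add: is_walk_def)
    show ?thesis
      using is_walk_rev[OF that(1) symA] that ne
      by (intro exI[of _ "rev ws"]) (simp add: hd_rev last_rev symdiff_comm)
  qed
  consider "a \<le> b" "b - a \<le> n" | "a \<le> b" "n < b - a" | "b < a" "a - b \<le> n" | "b < a" "n < a - b"
    by linarith
  then show ?thesis
  proof cases
    case 1
    have eq: "(a + (b - a)) mod (2*n) = b" using 1 assms by simp
    obtain ws where w: "is_walk (cyc_verts n x) (cyc_adj n x) ws" "hd ws = ?cv a"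
      "last ws = ?cv ((a + (b - a)) mod (2*n))" "length ws = Suc (b - a)"
      "card (?cv a \<ominus> ?cv ((a + (b - a)) mod (2*n))) = b - a"
      using cyc_walk[OF assms(1,2) 1(2), of x] by blast
    show ?thesis using w unfolding eq by (intro exI[of _ ws]) simp
  next
    case 2
    have "b + (2*n - (b - a)) = a + 2*n" using 2 assms by arith
    hence eq: "(b + (2*n - (b - a))) mod (2*n) = a" using assms by simp
    have le: "2*n - (b - a) \<le> n" using 2 by simp
    obtain ws where w: "is_walk (cyc_verts n x) (cyc_adj n x) ws" "hd ws = ?cv b"
      "last ws = ?cv ((b + (2*n - (b - a))) mod (2*n))" "length ws = Suc (2*n - (b - a))"
      "card (?cv b \<ominus> ?cv ((b + (2*n - (b - a))) mod (2*n))) = 2*n - (b - a)"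
      using cyc_walk[OF assms(1,3) le, of x] by blast
    show ?thesis using w unfolding eq by (intro rev[of ws]) simp_all
  next
    case 3
    have eq: "(b + (a - b)) mod (2*n) = a" using 3 assms by simp
    obtain ws where w: "is_walk (cyc_verts n x) (cyc_adj n x) ws" "hd ws = ?cv b"
      "last ws = ?cv ((b + (a - b)) mod (2*n))" "length ws = Suc (a - b)"
      "card (?cv b \<ominus> ?cv ((b + (a - b)) mod (2*n))) = a - b"
      using cyc_walk[OF assms(1,3) 3(2), of x] by blast
    show ?thesis using w unfolding eq by (intro rev[of ws]) simp_all
  next
    case 4
    have "a + (2*n - (a - b)) = b + 2*n" using 4 assms by arith
    hence eq: "(a + (2*n - (a - b))) mod (2*n) = b" using assms by simp
    have le: "2*n - (a - b) \<le> n" using 4 by simp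
    obtain ws where w: "is_walk (cyc_verts n x) (cyc_adj n x) ws" "hd ws = ?cv a"
      "last ws = ?cv ((a + (2*n - (a - b))) mod (2*n))" "length ws = Suc (2*n - (a - b))"
      "card (?cv a \<ominus> ?cv ((a + (2*n - (a - b))) mod (2*n))) = 2*n - (a - b)"
      using cyc_walk[OF assms(1,2) le, of x] by blast
    show ?thesis using w unfolding eq by (intro exI[of _ ws]) simp
  qed
qed



lemma span_sub: "x \<in> span (Cfam (Suc m)) \<Longrightarrow> x \<subseteq> {1..2^(Suc m) - 1}"
  using good_sub[OF span_good] by blast

lemma cv_sub:
  assumes "x \<subseteq> {1..n - 1}" "j < 2*n"
  shows "cyc_vertex n x j \<subseteq> {1..n}"
proof -
  have "Fv n j \<subseteq> {1..n}" using Fv_sub assms(2) by simp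
  moreover have "cyc_vertex n x j \<subseteq> x \<union> Fv n j" unfolding cyc_vertex_Fv by auto
  moreover have "{1..n - 1} \<subseteq> {1..n}" by auto
  hence "x \<subseteq> {1..n}" using assms(1) by (rule subset_trans[rotated])
  ultimately show ?thesis by blast
qed

lemma cv_flip:
  assumes "j < 2*n"
  shows "cyc_vertex n x j \<ominus> cyc_vertex n x ((j + 1) mod (2*n)) = {j mod n + 1}"
  unfolding cyc_vertex_Fv symdiff_cancel using Fv_flip[OF assms] .

lemma cyc_adj_props:
  assumes "cyc_adj n x u v"
  shows "u \<in> cyc_verts n x \<and> v \<in> cyc_verts n x \<and> Qadj u v"
proof -
  obtain j where j: "j < 2*n" "{u, v} = {cyc_vertex n x j, cyc_vertex n x ((j + 1) mod (2*n))}"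
    using assms unfolding cyc_adj_def by blast
  have n0: "0 < n" using j(1) by simp
  have m: "(j + 1) mod (2*n) < 2*n" using n0 by simp
  have c: "card (cyc_vertex n x j \<ominus> cyc_vertex n x ((j + 1) mod (2*n))) = 1"
    using cv_flip[OF j(1)] by simp
  from j(2) have "(u = cyc_vertex n x j \<and> v = cyc_vertex n x ((j + 1) mod (2*n))) \<or>
     (u = cyc_vertex n x ((j + 1) mod (2*n)) \<and> v = cyc_vertex n x j)"
    by (simp add: doubleton_eq_iff)
  thus ?thesis
  proof
    assume uv: "u = cyc_vertex n x j \<and> v = cyc_vertex n x ((j + 1) mod (2*n))"
    thus ?thesis using j(1) m c unfolding cyc_verts_def Qadj_def by auto
  next
    assume uv: "u = cyc_vertex n x ((j + 1) mod (2*n)) \<and> v = cyc_vertex n x j"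
    thus ?thesis using j(1) m c unfolding cyc_verts_def Qadj_def by (auto simp: symdiff_comm)
  qed
qed

lemma isometric:
  assumes "n \<ge> 1" "x \<subseteq> {1..n - 1}"
  shows "isometric_subgraph (Qverts n) Qadj (cyc_verts n x) (cyc_adj n x)"
proof -
  let ?W = "cyc_verts n x" and ?F = "cyc_adj n x"
  have WV: "?W \<subseteq> Qverts n"
  proof
    fix z assume "z \<in> ?W"
    then obtain j where "j < 2*n" "z = cyc_vertex n x j" unfolding cyc_verts_def by auto
    thus "z \<in> Qverts n" unfolding Qverts_def using cv_sub[OF assms(2)] by blast
  qed
  have FE: "\<And>u v. ?F u v \<Longrightarrow> Qadj u v" using cyc_adj_props by blast
  have "gdist ?W ?F u v = gdist (Qverts n) Qadj u v" if u: "u \<in> ?W" and v: "v \<in> ?W" for u v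
  proof -
    obtain a where a: "a < 2*n" "u = cyc_vertex n x a" using u unfolding cyc_verts_def by auto
    obtain b where b: "b < 2*n" "v = cyc_vertex n x b" using v unfolding cyc_verts_def by auto
    obtain ws where ws: "is_walk ?W ?F ws" "hd ws = u" "last ws = v" "length ws = Suc (card (u \<ominus> v))"
      using cyc_walk2[OF assms(1) a(1) b(1), of x] a b by blast
    have g1: "gdist ?W ?F u v \<le> card (u \<ominus> v)" using gdist_le[OF ws(1-3)] ws(4) by simp
    obtain ws' where ws': "is_walk ?W ?F ws'" "hd ws' = u" "last ws' = v" "length ws' = Suc (gdist ?W ?F u v)"
      using gdist_ex[OF ws(1-3)] by blast
    have ws'Q: "is_walk (Qverts n) Qadj ws'" using is_walk_lift[OF ws'(1) WV FE] .
    have g2: "gdist (Qverts n) Qadj u v \<le> gdist ?W ?F u v" using gdist_le[OF ws'Q ws'(2,3)] ws'(4) by simp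
    obtain zs where zs: "is_walk (Qverts n) Qadj zs" "hd zs = u" "last zs = v" "length zs = Suc (gdist (Qverts n) Qadj u v)"
      using gdist_ex[OF ws'Q ws'(2,3)] by blast
    have g3: "card (u \<ominus> v) \<le> gdist (Qverts n) Qadj u v" using walk_lower'[OF zs(1)] zs(2-4) by simp
    show ?thesis using g1 g2 g3 by linarith
  qed
  thus ?thesis unfolding isometric_subgraph_def using WV cyc_adj_props by blast
qed

lemma cover:
  assumes "n = 2^(Suc m)" "y \<in> Qverts n"
  shows "\<exists>x \<in> span (Cfam (Suc m)). y \<in> cyc_verts n x"
proof -
  have ys: "y \<subseteq> {1..n}" using assms(2) by (simp add: Qverts_def)
  have n1: "n \<ge> 1" using assms(1) by simp
  show ?thesis
  proof (cases "n \<in> y")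
    case False
    have "y \<subseteq> {1..n - 1}"
    proof
      fix a assume "a \<in> y"
      hence "a \<in> {1..n}" "a \<noteq> n" using ys False by auto
      thus "a \<in> {1..n - 1}" by auto
    qed
    hence "y \<subseteq> {1..2^(Suc m) - 1}" using assms(1) by simp
    then obtain j where j: "j \<le> 2^(Suc m) - 1" "good (Suc m) (y \<ominus> {1..j})"
      using cover_good by blast
    let ?x = "y \<ominus> {1..j}"
    have xs: "?x \<in> span (Cfam (Suc m))" using good_span[OF j(2)] .
    have "j \<le> n - 1" using j(1) assms(1) by simp
    hence jn: "j \<le> n" "j < 2*n" using n1 by linarith+
    have "cyc_vertex n ?x j = y" unfolding cyc_vertex_def using jn by auto
    hence "y \<in> cyc_verts n ?x" unfolding cyc_verts_def using jn by force
    thus ?thesis using xs by blast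
  next
    case True
    let ?y = "y \<ominus> {1..n}"
    have "?y \<subseteq> {1..n - 1}"
    proof
      fix a assume "a \<in> ?y"
      hence "a \<in> {1..n}" "a \<noteq> n" using ys True by auto
      thus "a \<in> {1..n - 1}" by auto
    qed
    hence "?y \<subseteq> {1..2^(Suc m) - 1}" using assms(1) by simp
    then obtain j where j: "j \<le> 2^(Suc m) - 1" "good (Suc m) (?y \<ominus> {1..j})"
      using cover_good by blast
    let ?x = "?y \<ominus> {1..j}"
    have xs: "?x \<in> span (Cfam (Suc m))" using good_span[OF j(2)] .
    have "j \<le> n - 1" using j(1) assms(1) by simp
    hence jn: "n + j < 2*n" using n1 by linarith
    have "cyc_vertex n ?x (n + j) = y"
    proof (cases "j = 0")
      case True thus ?thesis unfolding cyc_vertex_def by auto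
    next
      case False thus ?thesis unfolding cyc_vertex_def by auto
    qed
    hence "y \<in> cyc_verts n ?x" unfolding cyc_verts_def using jn by force
    thus ?thesis using xs by blast
  qed
qed

theorem mainTheorem5:
  fixes k n :: nat
  assumes "k \<ge> 1" and "n = 2 ^ k"
  shows "(\<forall>x \<in> span (Cfam k).
            \<comment> \<open>C(x) is a cycle of length 2n in Q_n (2n distinct vertices, consecutive ones adjacent)\<close>
            inj_on (cyc_vertex n x) {0..<2*n} \<and>
            (\<forall>j<2*n. cyc_vertex n x j \<in> Qverts n \<and>
                      Qadj (cyc_vertex n x j) (cyc_vertex n x ((j + 1) mod (2*n)))) \<and>
            \<comment> \<open>flip sequence (1,...,n,1,...,n)\<close>
            (\<forall>j<2*n. cyc_vertex n x j \<ominus> cyc_vertex n x ((j + 1) mod (2*n)) = {j mod n + 1}) \<and>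
            \<comment> \<open>isometric\<close>
            isometric_subgraph (Qverts n) Qadj (cyc_verts n x) (cyc_adj n x))
         \<and> (\<Union>x \<in> span (Cfam k). cyc_verts n x) = Qverts n
         \<and> (\<forall>x \<in> span (Cfam k). \<forall>y \<in> span (Cfam k). x \<noteq> y \<longrightarrow> cyc_verts n x \<inter> cyc_verts n y = {})"
proof -
  obtain m where km: "k = Suc m" using assms(1) by (cases k) auto
  have n1: "n \<ge> 1" using assms(2) by simp
  have P1: "inj_on (cyc_vertex n x) {0..<2*n} \<and>
            (\<forall>j<2*n. cyc_vertex n x j \<in> Qverts n \<and>
                      Qadj (cyc_vertex n x j) (cyc_vertex n x ((j + 1) mod (2*n)))) \<and>
            (\<forall>j<2*n. cyc_vertex n x j \<ominus> cyc_vertex n x ((j + 1) mod (2*n)) = {j mod n + 1}) \<and>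
            isometric_subgraph (Qverts n) Qadj (cyc_verts n x) (cyc_adj n x)"
    if x: "x \<in> span (Cfam k)" for x
  proof -
    have xs: "x \<subseteq> {1..n - 1}" using span_sub[of x m] x km assms(2) by simp
    have inj: "inj_on (cyc_vertex n x) {0..<2*n}"
    proof (rule inj_onI)
      fix j j' assume j: "j \<in> {0..<2*n}" "j' \<in> {0..<2*n}" "cyc_vertex n x j = cyc_vertex n x j'"
      show "j = j'"
      proof (rule ccontr)
        assume ne: "j \<noteq> j'"
        have "Fv n j \<ominus> Fv n j' = {}" using j(3) unfolding cyc_vertex_Fv
          by (metis symdiff_cancel symdiff_self)
        hence "good k (Fv n j \<ominus> Fv n j')" by (simp add: good_empty)
        thus False using FvD_good[OF ne _ _ _ assms(2)] j by auto
      qed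
    qed
    have fl: "\<forall>j<2*n. cyc_vertex n x j \<ominus> cyc_vertex n x ((j + 1) mod (2*n)) = {j mod n + 1}"
      using cv_flip by blast
    have qa: "\<forall>j<2*n. cyc_vertex n x j \<in> Qverts n \<and>
                      Qadj (cyc_vertex n x j) (cyc_vertex n x ((j + 1) mod (2*n)))"
      using cv_sub[OF xs] fl unfolding Qverts_def Qadj_def by simp
    show ?thesis using inj fl qa isometric[OF n1 xs] by blast
  qed
  have P2: "(\<Union>x \<in> span (Cfam k). cyc_verts n x) = Qverts n"
  proof
    show "(\<Union>x \<in> span (Cfam k). cyc_verts n x) \<subseteq> Qverts n"
    proof
      fix z assume "z \<in> (\<Union>x \<in> span (Cfam k). cyc_verts n x)"
      then obtain x j where "x \<in> span (Cfam k)" "j < 2*n" "z = cyc_vertex n x j"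
        unfolding cyc_verts_def by auto
      thus "z \<in> Qverts n" using P1 by blast
    qed
    show "Qverts n \<subseteq> (\<Union>x \<in> span (Cfam k). cyc_verts n x)"
      using cover[of n m] assms(2) km by blast
  qed
  have P3: "\<forall>x \<in> span (Cfam k). \<forall>y \<in> span (Cfam k). x \<noteq> y \<longrightarrow> cyc_verts n x \<inter> cyc_verts n y = {}"
  proof (intro ballI impI)
    fix x y assume x: "x \<in> span (Cfam k)" and y: "y \<in> span (Cfam k)" and ne: "x \<noteq> y"
    show "cyc_verts n x \<inter> cyc_verts n y = {}"
    proof (rule ccontr)
      assume "cyc_verts n x \<inter> cyc_verts n y \<noteq> {}"
      then obtain j j' where j: "j < 2*n" "j' < 2*n" "cyc_vertex n x j = cyc_vertex n y j'"
        unfolding cyc_verts_def by auto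
      have eq: "x \<ominus> y = Fv n j \<ominus> Fv n j'" using j(3) unfolding cyc_vertex_Fv by auto
      have g: "good k (x \<ominus> y)" using good_symdiff[OF span_good span_good] x y km by simp
      have "j \<noteq> j'"
      proof
        assume "j = j'"
        hence "x \<ominus> y = {}" using eq by simp
        hence "x = y" by auto
        thus False using ne by simp
      qed
      thus False using FvD_good[OF _ j(1,2) _ assms(2)] g eq by simp
    qed
  qed
  show ?thesis using P1 P2 P3 by blast
qed

end
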